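(* Let $w=a_0a_1\cdots a_k$ and $w'=b_0b_1\cdots b_k$ be admissible $(k+1)$-words, let $p$ be the fundamental period of $w$, and suppose there is a non-negative integer $i_0$ which is the smallest non-negative integer with $b_0\cdots b_{k-i_0}=a_{i_0}\cdots a_k$. Let $i$ be a positive integer with $i\le k$ and $b_0\cdots b_{k-i}=a_i\cdots a_k$. Then either $p$ divides $i-i_0$ or $i\ge k+2-p$.
   Context: Let $\mathcal{A}$ be a finite alphabet and $T=(T_{x,y})$ a square matrix indexed by $\mathcal{A}$ with entries in $\{0,1\}$. An admissible $m$-word is a string $u_1\cdots u_m$ with $T_{u_{i+1},u_i}=1$ for all $i$. For an admissible $k$-word $u=u_1\cdots u_k$, $h(u)$ is the least non-negative integer $h$ such that $u$ is the only admissible $k$-word beginning with $u_1\cdots u_{h+1}$. For an admissible $(k+1)$-word $w=a_0a_1\cdots a_k$, let $d=h(a_1\cdots a_k)$; the fundamental period of $w$ is the smallest integer $p$ with $1\le p\le d$ and $a_0a_1\cdots a_{k-p}=a_p\cdots a_k$, and $p=k+1$ if no such integer exists. *)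

theory Defs
  imports Main
begin

text \<open>Words are lists; u = u_1 ... u_m is the list [u_1,...,u_m] (0-based indices in the list).
  The transition matrix T is a boolean function on a finite alphabet: T x y means T_{x,y} = 1.\<close>

definition admissible :: "('a \<Rightarrow> 'a \<Rightarrow> bool) \<Rightarrow> 'a list \<Rightarrow> bool" where
  "admissible T u \<longleftrightarrow> (\<forall>i. Suc i < length u \<longrightarrow> T (u ! Suc i) (u ! i))"

definition hval :: "('a \<Rightarrow> 'a \<Rightarrow> bool) \<Rightarrow> 'a list \<Rightarrow> nat" where
  "hval T u = (LEAST h. \<forall>v. admissible T v \<and> length v = length u \<and> take (h + 1) v = take (h + 1) u
                              \<longrightarrow> v = u)"

definition fund_period :: "('a \<Rightarrow> 'a \<Rightarrow> bool) \<Rightarrow> 'a list \<Rightarrow> nat" where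
  "fund_period T w =
    (let k = length w - 1; d = hval T (tl w) in
      if \<exists>p. 1 \<le> p \<and> p \<le> d \<and> take (k + 1 - p) w = drop p w
      then (LEAST p. 1 \<le> p \<and> p \<le> d \<and> take (k + 1 - p) w = drop p w)
      else k + 1)"

end

theory Submission
  imports Defs
begin

lemma take_drop_nth:
  assumes "length w = k + 1" "take (k + 1 - p) w = drop p w" "m + p \<le> k"
  shows "w ! m = w ! (m + p)"
proof -
  have "take (k + 1 - p) w ! m = drop p w ! m" using assms(2) by simp
  thus ?thesis using assms(1,3) by (simp add: add.commute)
qed

lemma per_mod:
  assumes "\<And>m. m + p \<le> k \<Longrightarrow> w ! m = w ! (m + p)" "0 < p"
  shows "m \<le> k \<Longrightarrow> w ! m = w ! (m mod p)"
proof (induction m rule: less_induct)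
  case (less m)
  show ?case
  proof (cases "m < p")
    case True thus ?thesis by simp
  next
    case False
    then obtain n where n: "m = n + p" by (metis add.commute le_add_diff_inverse not_less)
    have "w ! n = w ! (n mod p)" using less n assms(2) by simp
    moreover have "w ! n = w ! m" using assms(1)[of n] n less.prems by simp
    moreover have "m mod p = n mod p" using n by simp
    ultimately show ?thesis by simp
  qed
qed

theorem lemma4p1:
  fixes T :: "'a::finite \<Rightarrow> 'a \<Rightarrow> bool"
    and w w' :: "'a list" and k i i0 :: nat
  assumes "admissible T w" and "admissible T w'"
    and "length w = k + 1" and "length w' = k + 1"
    and "take (k + 1 - i0) w' = drop i0 w"
    and "\<forall>j<i0. take (k + 1 - j) w' \<noteq> drop j w"
    and "0 < i" and "i \<le> k"
    and "take (k + 1 - i) w' = drop i w"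
  shows "int (fund_period T w) dvd (int i - int i0) \<or> i \<ge> k + 2 - fund_period T w"
proof -
  define d where "d = hval T (tl w)"
  define Q where "Q = (\<lambda>p. 1 \<le> p \<and> p \<le> d \<and> take (k + 1 - p) w = drop p w)"
  have fp: "fund_period T w = (if \<exists>p. Q p then (LEAST p. Q p) else k + 1)"
    unfolding fund_period_def Q_def d_def using assms(3) by (simp add: Let_def)
  have ii0: "i0 \<le> i" using assms(6,9) by (meson not_le)
  show ?thesis
  proof (cases "\<exists>p. Q p")
    case False thus ?thesis using fp assms(7) by simp
  next
    case True
    define p where "p = (LEAST p. Q p)"
    have Qp: "Q p" unfolding p_def using True by (meson LeastI)
    have minp: "\<And>r. r < p \<Longrightarrow> \<not> Q r" unfolding p_def using not_less_Least by blast
    have fpp: "fund_period T w = p" using fp True p_def by simp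
    show ?thesis
    proof (rule ccontr)
      assume neg: "\<not> ?thesis"
      hence ik: "i + p \<le> k + 1" and ndvd: "\<not> int p dvd (int i - int i0)" using fpp by auto
      have p1: "1 \<le> p" "p \<le> d" using Qp Q_def by auto
      have perp: "\<And>m. m + p \<le> k \<Longrightarrow> w ! m = w ! (m + p)"
        using take_drop_nth[OF assms(3)] Qp Q_def by blast
      have cong: "\<And>a b. a \<le> k \<Longrightarrow> b \<le> k \<Longrightarrow> a mod p = b mod p \<Longrightarrow> w ! a = w ! b"
        using per_mod[OF perp] p1 by (metis less_le_trans zero_less_one)
      define q where "q = i - i0"
      define r where "r = q mod p"
      have "\<not> p dvd q" using ndvd ii0 q_def
        by (metis of_nat_diff of_nat_dvd_iff)
      hence r0: "0 < r" "r < p" using r_def p1 by (auto simp: dvd_eq_mod_eq_0 gr0I)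
      have shift: "\<And>j. j \<le> k - i \<Longrightarrow> w ! (i0 + j) = w ! (i + j)"
      proof -
        fix j assume j: "j \<le> k - i"
        have "take (k + 1 - i0) w' ! j = drop i0 w ! j" using assms(5) by simp
        moreover have "take (k + 1 - i) w' ! j = drop i w ! j" using assms(9) by simp
        ultimately show "w ! (i0 + j) = w ! (i + j)" using j assms(3,4,8) ii0 by simp
      qed
      have perr: "\<And>m. m + r \<le> k \<Longrightarrow> w ! m = w ! (m + r)"
      proof -
        fix m assume m: "m + r \<le> k"
        define j where "j = (m + p * i0 - i0) mod p"
        have jp: "j < p" using j_def p1 by simp
        have mm: "(i0 + j) mod p = m mod p"
        proof -
          have "(i0 + j) mod p = (i0 + (m + p * i0 - i0)) mod p" unfolding j_def by (simp add: mod_add_right_eq)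
          also have "i0 + (m + p * i0 - i0) = m + p * i0" using p1
            by (metis add.commute le_add2 le_add_diff_inverse less_one mult_le_cancel2 nat_mult_1 not_less trans_le_add2)
          finally show ?thesis by simp
        qed
        have jk: "j \<le> k - i" using jp ik by linarith
        have "w ! m = w ! (i0 + j)" using cong[of m "i0+j"] mm m jk assms(8) ii0 by simp
        also have "\<dots> = w ! (i + j)" using shift jk by simp
        also have "\<dots> = w ! (m + r)"
        proof (rule cong)
          show "i + j \<le> k" using jk assms(8) by simp
          show "m + r \<le> k" by fact
          have "(i + j) mod p = (i0 + j + q) mod p" using q_def ii0 by (simp add: add.commute)
          also have "\<dots> = ((i0 + j) mod p + q mod p) mod p" by (simp add: mod_add_eq)
          also have "\<dots> = (m mod p + r) mod p" using mm r_def by simp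
          also have "\<dots> = (m + r) mod p" by (simp add: mod_add_left_eq)
          finally show "(i + j) mod p = (m + r) mod p" .
        qed
        finally show "w ! m = w ! (m + r)" .
      qed
      have "take (k + 1 - r) w = drop r w"
        by (rule nth_equalityI) (use assms(3) perr in \<open>auto simp: add.commute\<close>)
      hence "Q r" using Q_def r0 p1 by auto
      thus False using minp r0 by blast
    qed
  qed
qed

end
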